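(* Let $\mathcal{X}\subset\mathbb{R}^d$ be a compact metric space, $\mathcal{Y}\subset\mathbb{R}$, and let $(X,Y)$ be distributed according to a probability measure $\rho$ on $\mathcal{X}\times\mathcal{Y}$ with marginal $\rho_{\mathcal{X}}$ on $\mathcal{X}$. Let $f^\star(x)=\mathbb{E}(Y\mid X=x)$ be bounded, let $\mathcal{H}\subset C(\mathcal{X})$ be uniformly bounded, and set $M=\max\{\|f^\star\|_\infty,\sup_{f\in\mathcal{H}}\|f\|_\infty\}$. Assume there is $\epsilon>0$ with $\mathbb{E}|Y|^{1+\epsilon}<+\infty$. Let $\sigma>\max\{2M,1\}$. Then there exists a constant $c_\epsilon>0$ independent of $\sigma$ such that for every measurable function $f:\mathcal{X}\to\mathbb{R}$ with $\|f\|_\infty\le M$, \[ \Big|\big[\mathcal{R}^\sigma(f)-\mathcal{R}^\sigma(f^\star)\big]-\|f-f^\star\|_{2,\rho}^2\Big|\le \frac{c_\epsilon}{\sigma^\epsilon}. \]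
   Context: The Huber loss with scale parameter $\sigma>0$ is $\ell_\sigma(t)=t^2$ if $|t|\le\sigma$ and $\ell_\sigma(t)=2\sigma|t|-\sigma^2$ otherwise. The generalization error of a measurable $f:\mathcal{X}\to\mathbb{R}$ is $\mathcal{R}^\sigma(f)=\mathbb{E}\,\ell_\sigma(Y-f(X))$, the expectation taken jointly over $(X,Y)\sim\rho$. $\|g\|_{2,\rho}$ denotes the $L^2(\rho_{\mathcal{X}})$ norm $\big(\int_{\mathcal{X}} g(x)^2\,d\rho_{\mathcal{X}}(x)\big)^{1/2}$. *)

theory Defs
  imports "HOL-Probability.Probability"
begin

definition huber :: "real \<Rightarrow> real \<Rightarrow> real" where
  "huber \<sigma> t = (if \<bar>t\<bar> \<le> \<sigma> then t\<^sup>2 else 2 * \<sigma> * \<bar>t\<bar> - \<sigma>\<^sup>2)"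

definition huber_risk :: "real \<Rightarrow> ('a \<times> real) measure \<Rightarrow> ('a \<Rightarrow> real) \<Rightarrow> real" where
  "huber_risk \<sigma> \<rho> f = (\<integral>z. huber \<sigma> (snd z - f (fst z)) \<partial>\<rho>)"

definition marginal_X :: "('a::topological_space \<times> real) measure \<Rightarrow> 'a measure" where
  "marginal_X \<rho> = distr \<rho> borel fst"

definition L2_norm_rho :: "('a::topological_space \<times> real) measure \<Rightarrow> ('a \<Rightarrow> real) \<Rightarrow> real" where
  "L2_norm_rho \<rho> g = sqrt (\<integral>x. (g x)\<^sup>2 \<partial>(marginal_X \<rho>))"

definition sup_norm_on :: "'a set \<Rightarrow> ('a \<Rightarrow> real) \<Rightarrow> real" where
  "sup_norm_on X f = (SUP x\<in>X. \<bar>f x\<bar>)"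

end

theory Submission
  imports Defs
begin
lemma fst_meas: "fst \<in> borel_measurable (borel :: ('a::euclidean_space \<times> real) measure)"
  by (intro borel_measurable_continuous_onI continuous_intros)
lemma snd_meas: "snd \<in> borel_measurable (borel :: ('a::euclidean_space \<times> real) measure)"
  by (intro borel_measurable_continuous_onI continuous_intros)
lemma huber_meas: "huber s \<in> borel_measurable borel"
  unfolding huber_def by measurable

lemma huber_lip: assumes "s > 0" shows "\<bar>huber s u - huber s t\<bar> \<le> 2 * s * \<bar>u - t\<bar>"
proof -
  have A: "\<bar>u\<^sup>2 - t\<^sup>2\<bar> \<le> 2 * s * \<bar>u - t\<bar>" if "\<bar>u\<bar> \<le> s" "\<bar>t\<bar> \<le> s" for u t :: real
  proof -
    have "\<bar>u\<^sup>2 - t\<^sup>2\<bar> = \<bar>u - t\<bar> * \<bar>u + t\<bar>" by (simp add: power2_eq_square algebra_simps abs_mult[symmetric])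
    also have "\<dots> \<le> \<bar>u - t\<bar> * (2 * s)" using that by (intro mult_left_mono) auto
    finally show ?thesis by (simp add: ac_simps)
  qed
  have B: "\<bar>(2 * s * \<bar>u\<bar> - s\<^sup>2) - t\<^sup>2\<bar> \<le> 2 * s * \<bar>u - t\<bar>" if "\<bar>u\<bar> > s" "\<bar>t\<bar> \<le> s" for u t :: real
  proof -
    have "s\<^sup>2 + t\<^sup>2 \<ge> 2 * s * \<bar>t\<bar>" using sum_squares_bound[of s "\<bar>t\<bar>"] by (simp add: power2_eq_square)
    moreover have "2 * s * \<bar>u\<bar> - s\<^sup>2 \<ge> t\<^sup>2"
    proof -
      have "t\<^sup>2 \<le> s\<^sup>2" using that assms abs_le_square_iff[of t s] by simp
      moreover have "s * s \<le> s * \<bar>u\<bar>" using that assms by (intro mult_left_mono) auto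
      ultimately show ?thesis by (simp add: power2_eq_square)
    qed
    moreover have "\<bar>u\<bar> - \<bar>t\<bar> \<le> \<bar>u - t\<bar>" by simp
    ultimately have "(2 * s * \<bar>u\<bar> - s\<^sup>2) - t\<^sup>2 \<le> 2 * s * (\<bar>u\<bar> - \<bar>t\<bar>)"
      using right_diff_distrib[of "2 * s" "\<bar>u\<bar>" "\<bar>t\<bar>"] by linarith
    moreover have "2 * s * (\<bar>u\<bar> - \<bar>t\<bar>) \<le> 2 * s * \<bar>u - t\<bar>"
      using assms by (intro mult_left_mono) auto
    ultimately have "(2 * s * \<bar>u\<bar> - s\<^sup>2) - t\<^sup>2 \<le> 2 * s * \<bar>u - t\<bar>" by linarith
    thus ?thesis using \<open>2 * s * \<bar>u\<bar> - s\<^sup>2 \<ge> t\<^sup>2\<close> by linarith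
  qed
  have C: "\<bar>(2 * s * \<bar>u\<bar> - s\<^sup>2) - (2 * s * \<bar>t\<bar> - s\<^sup>2)\<bar> \<le> 2 * s * \<bar>u - t\<bar>" for u t :: real
  proof -
    have "\<bar>(2 * s * \<bar>u\<bar> - s\<^sup>2) - (2 * s * \<bar>t\<bar> - s\<^sup>2)\<bar> = 2 * s * \<bar>\<bar>u\<bar> - \<bar>t\<bar>\<bar>"
    proof -
      have "(2 * s * \<bar>u\<bar> - s\<^sup>2) - (2 * s * \<bar>t\<bar> - s\<^sup>2) = (2 * s) * (\<bar>u\<bar> - \<bar>t\<bar>)"
        by (simp add: algebra_simps)
      thus ?thesis using assms by (simp add: abs_mult)
    qed
    also have "\<dots> \<le> 2 * s * \<bar>u - t\<bar>" using assms by (intro mult_left_mono) auto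
    finally show ?thesis .
  qed
  show ?thesis unfolding huber_def
    using A[of u t] B[of u t] B[of t u] C[of u t] by (auto simp: abs_minus_commute)
qed
lemma abs_le_powr: fixes y e :: real assumes "e > 0" shows "\<bar>y\<bar> \<le> 1 + \<bar>y\<bar> powr (1 + e)"
proof (cases "\<bar>y\<bar> \<ge> 1")
  case True
  have "\<bar>y\<bar> = \<bar>y\<bar> powr 1" using True by simp
  also have "\<dots> \<le> \<bar>y\<bar> powr (1 + e)" using True assms by (intro powr_mono) auto
  finally show ?thesis by simp
qed (auto intro: order.trans[OF _ add_increasing2[OF powr_ge_zero order.refl]])

lemma err_bound:
  fixes M s e y a b :: real
  assumes M0: "M \<ge> 0" and sM: "s > max (2 * M) 1" and e0: "e > 0" and a: "\<bar>a\<bar> \<le> M" and b: "\<bar>b\<bar> \<le> M"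
  shows "\<bar>huber s (y - b) - huber s (y - a) - ((b - a)\<^sup>2 - 2 * (b - a) * (y - a))\<bar>
     \<le> (14 * M * 2 powr e + (20 * M\<^sup>2 + 4 * M) * (4 * M) powr e) / s powr e * (1 + \<bar>y\<bar> powr (1 + e))"
    (is "\<bar>?E\<bar> \<le> (?K + ?L) / _ * ?Y")
proof -
  have s0: "s > 0" using sM by simp
  have K0: "?K \<ge> 0" and L0: "?L \<ge> 0" using M0 by auto
  have Y0: "?Y \<ge> 0" by (simp add: add_nonneg_nonneg)
  have spos: "s powr e > 0" using s0 by simp
  have RHS0: "(?K + ?L) / s powr e * ?Y \<ge> 0" using K0 L0 Y0 spos by simp
  show ?thesis
  proof (cases "\<bar>y\<bar> \<le> s - M")
    case True
    have "\<bar>y - b\<bar> \<le> s" "\<bar>y - a\<bar> \<le> s" using True a b by auto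
    hence "?E = 0" unfolding huber_def by (simp add: power2_eq_square algebra_simps)
    thus ?thesis using RHS0 by simp
  next
    case False
    have l1: "\<bar>huber s (y - b) - huber s (y - a)\<bar> \<le> 2 * s * \<bar>(y - b) - (y - a)\<bar>"
      by (rule huber_lip[OF s0])
    have l2: "2 * s * \<bar>(y - b) - (y - a)\<bar> \<le> 2 * s * (2 * M)"
      using a b s0 by (intro mult_left_mono) auto
    have l3: "\<bar>(b - a)\<^sup>2 - 2 * (b - a) * (y - a)\<bar> = \<bar>b - a\<bar> * \<bar>a + b - 2 * y\<bar>"
      by (simp add: power2_eq_square algebra_simps abs_mult[symmetric])
    have l4: "\<bar>b - a\<bar> * \<bar>a + b - 2 * y\<bar> \<le> (2 * M) * (2 * M + 2 * \<bar>y\<bar>)"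
      using a b by (intro mult_mono) auto
    have L1: "\<bar>?E\<bar> \<le> 4 * M * s + 4 * M * \<bar>y\<bar> + 4 * M\<^sup>2"
    proof -
      have "\<bar>?E\<bar> \<le> \<bar>huber s (y - b) - huber s (y - a)\<bar> + \<bar>(b - a)\<^sup>2 - 2 * (b - a) * (y - a)\<bar>"
        by (rule abs_triangle_ineq4)
      moreover have "(2 * M) * (2 * M + 2 * \<bar>y\<bar>) = 4 * M * \<bar>y\<bar> + 4 * M\<^sup>2"
        by (simp add: algebra_simps power2_eq_square)
      moreover have "2 * s * (2 * M) = 4 * M * s" by simp
      ultimately show ?thesis using l1 l2 l3 l4 by linarith
    qed
    show ?thesis
    proof (cases "s \<ge> 4 * M")
      case True
      have y2: "s / 2 \<le> \<bar>y\<bar>" and ypos: "\<bar>y\<bar> > 0" using False True M0 s0 by auto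
      have "M * s \<le> M * (2 * \<bar>y\<bar>)" using y2 M0 by (intro mult_left_mono) auto
      moreover have "M * M \<le> M * (\<bar>y\<bar> / 2)" using True y2 M0 by (intro mult_left_mono) auto
      ultimately have E1: "\<bar>?E\<bar> \<le> 14 * M * \<bar>y\<bar>" using L1 by (simp add: power2_eq_square algebra_simps)
      have "s powr e / 2 powr e = (s / 2) powr e" using s0 by (simp add: powr_divide)
      also have "\<dots> \<le> \<bar>y\<bar> powr e" using y2 s0 e0 by (intro powr_mono2) auto
      finally have "s powr e \<le> 2 powr e * \<bar>y\<bar> powr e" by (simp add: field_simps)
      hence "14 * M * \<bar>y\<bar> * s powr e \<le> 14 * M * \<bar>y\<bar> * (2 powr e * \<bar>y\<bar> powr e)"
        using M0 ypos by (intro mult_left_mono) auto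
      also have "\<dots> = ?K * \<bar>y\<bar> powr (1 + e)" using ypos by (simp add: powr_add algebra_simps)
      finally have "14 * M * \<bar>y\<bar> \<le> ?K * \<bar>y\<bar> powr (1 + e) / s powr e"
        using spos by (simp add: field_simps)
      also have "\<dots> \<le> ?K * ?Y / s powr e" using K0 spos by (intro divide_right_mono mult_left_mono) auto
      also have "\<dots> \<le> (?K + ?L) / s powr e * ?Y"
      proof -
        have "(?K + ?L) / s powr e * ?Y = ?K * ?Y / s powr e + ?L * ?Y / s powr e"
          by (simp add: field_simps add_divide_distrib)
        moreover have "?L * ?Y / s powr e \<ge> 0" using L0 Y0 spos by simp
        ultimately show ?thesis by linarith
      qed
      finally show ?thesis using E1 by linarith
    next
      case False
      hence Mp: "M > 0" using s0 by auto
      have "\<bar>?E\<bar> \<le> 4 * M * (4 * M) + 4 * M * \<bar>y\<bar> + 4 * M\<^sup>2"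
        using L1 False M0 by (smt (verit) mult_left_mono)
      also have "\<dots> \<le> (20 * M\<^sup>2 + 4 * M) * ?Y"
      proof -
        have Yp: "0 \<le> \<bar>y\<bar> powr (1 + e)" by simp
        have "M * \<bar>y\<bar> \<le> M * ?Y" using abs_le_powr[OF e0, of y] Mp by (intro mult_left_mono) auto
        moreover have "M\<^sup>2 * 1 \<le> M\<^sup>2 * ?Y" using Yp by (intro mult_left_mono) auto
        moreover have "(20 * M\<^sup>2 + 4 * M) * ?Y = 20 * (M\<^sup>2 * ?Y) + 4 * (M * ?Y)"
          by (simp add: algebra_simps)
        moreover have "4 * M * (4 * M) + 4 * M * \<bar>y\<bar> + 4 * M\<^sup>2 = 20 * (M\<^sup>2 * 1) + 4 * (M * \<bar>y\<bar>)"
          by (simp add: algebra_simps power2_eq_square)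
        ultimately show ?thesis by linarith
      qed
      also have "\<dots> \<le> (20 * M\<^sup>2 + 4 * M) * ?Y * ((4 * M) powr e / s powr e)"
      proof -
        have "s powr e \<le> (4 * M) powr e" using False s0 e0 by (intro powr_mono2) auto
        hence "1 \<le> (4 * M) powr e / s powr e" using spos by simp
        moreover have "(20 * M\<^sup>2 + 4 * M) * ?Y \<ge> 0" using Mp Y0 by simp
        ultimately have "(20 * M\<^sup>2 + 4 * M) * ?Y * 1 \<le> (20 * M\<^sup>2 + 4 * M) * ?Y * ((4 * M) powr e / s powr e)"
          by (intro mult_left_mono)
        thus ?thesis by (simp only: mult_1_right)
      qed
      also have "\<dots> = ?L / s powr e * ?Y" using spos by (simp add: field_simps)
      also have "\<dots> \<le> (?K + ?L) / s powr e * ?Y" using K0 Y0 spos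
        by (intro mult_right_mono divide_right_mono) auto
      finally show ?thesis .
    qed
  qed
qed
lemma orth:
  fixes P :: "('a::euclidean_space \<times> real) measure" and \<phi> :: "'a \<times> real \<Rightarrow> real" and h :: "'a \<Rightarrow> real"
  assumes intp: "integrable P \<phi>"
    and ind: "\<And>A. A \<in> sets borel \<Longrightarrow> (\<integral>z. indicator A (fst z) * \<phi> z \<partial>P) = 0"
    and hm: "h \<in> borel_measurable borel" and hb: "\<And>x. \<bar>h x\<bar> \<le> B"
    and fstm: "fst \<in> P \<rightarrow>\<^sub>M borel"
  shows "(\<integral>z. h (fst z) * \<phi> z \<partial>P) = 0"
proof -
  have B0: "B \<ge> 0" using hb[of undefined] by simp
  have pm: "\<phi> \<in> borel_measurable P" using intp by simp
  have intb: "integrable P (\<lambda>z. g (fst z) * \<phi> z)" if gm: "g \<in> borel_measurable borel"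
    and gb: "\<And>x. \<bar>g x\<bar> \<le> C" for g :: "'a \<Rightarrow> real" and C
  proof (rule Bochner_Integration.integrable_bound[OF integrable_mult_right[OF intp, of C]])
    show "(\<lambda>z. g (fst z) * \<phi> z) \<in> borel_measurable P"
      using measurable_compose[OF fstm gm] pm by measurable
    show "AE z in P. norm (g (fst z) * \<phi> z) \<le> norm (C * \<phi> z)"
    proof (intro AE_I2)
      fix z
      have "C \<ge> 0" using gb[of undefined] by simp
      thus "norm (g (fst z) * \<phi> z) \<le> norm (C * \<phi> z)"
        using gb[of "fst z"] by (simp add: abs_mult mult_right_mono)
    qed
  qed
  define I where "I = (\<integral>z. h (fst z) * \<phi> z \<partial>P)"
  have key: "\<bar>I\<bar> * real n \<le> (\<integral>z. \<bar>\<phi> z\<bar> \<partial>P)" if n1: "n \<ge> 1" for n :: nat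
  proof -
    define hn where "hn x = real_of_int \<lfloor>real n * h x\<rfloor> / real n" for x
    define N where "N = \<lceil>real n * B\<rceil>"
    have hnm: "hn \<in> borel_measurable borel" unfolding hn_def using hm by measurable
    have hnb: "\<bar>h x - hn x\<bar> \<le> 1 / real n" for x
    proof -
      have "real_of_int \<lfloor>real n * h x\<rfloor> \<le> real n * h x" "real n * h x < real_of_int \<lfloor>real n * h x\<rfloor> + 1"
        by linarith+
      moreover have "real n * h x - real_of_int \<lfloor>real n * h x\<rfloor> = real n * (h x - hn x)"
        using n1 by (simp add: hn_def field_simps)
      ultimately have "0 \<le> real n * (h x - hn x)" "real n * (h x - hn x) \<le> 1" by linarith+
      thus ?thesis using n1 by (simp add: field_simps abs_if split: if_splits) 
    qed
    have hnbb: "\<bar>hn x\<bar> \<le> B + 1" for x using hnb[of x] hb[of x] n1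
      by (smt (verit) divide_le_eq_1 of_nat_1 of_nat_mono)
    have rng: "\<lfloor>real n * h x\<rfloor> \<in> {-N..N}" for x
    proof -
      have "real n * h x \<le> real n * B" using hb[of x] by (auto intro: mult_left_mono simp: abs_le_iff)
      moreover have "real n * (- B) \<le> real n * h x" using hb[of x] by (intro mult_left_mono) (auto simp: abs_le_iff)
      ultimately have "real n * h x \<le> real n * B" "- (real n * B) \<le> real n * h x" by auto
      hence "\<lfloor>real n * h x\<rfloor> \<le> \<lfloor>real n * B\<rfloor>" "\<lfloor>- (real n * B)\<rfloor> \<le> \<lfloor>real n * h x\<rfloor>"
        by (auto intro: floor_mono)
      moreover have "\<lfloor>real n * B\<rfloor> \<le> \<lceil>real n * B\<rceil>" by (rule floor_le_ceiling)
      ultimately have "\<lfloor>real n * h x\<rfloor> \<le> \<lceil>real n * B\<rceil>" "- \<lceil>real n * B\<rceil> \<le> \<lfloor>real n * h x\<rfloor>"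
        using order.trans floor_minus by metis+
      thus ?thesis unfolding N_def by simp
    qed
    have sets: "{x. \<lfloor>real n * h x\<rfloor> = k} \<in> sets borel" for k
      using hm by measurable
    have decomp: "hn (fst z) * \<phi> z = (\<Sum>k\<in>{-N..N}. (real_of_int k / real n) * (indicator {x. \<lfloor>real n * h x\<rfloor> = k} (fst z) * \<phi> z))" for z
    proof -
      have "(\<Sum>k\<in>{-N..N}. (real_of_int k / real n) * (indicator {x. \<lfloor>real n * h x\<rfloor> = k} (fst z) * \<phi> z))
         = (\<Sum>k\<in>{-N..N}. if k = \<lfloor>real n * h (fst z)\<rfloor> then (real_of_int k / real n) * \<phi> z else 0)"
        by (intro sum.cong) (auto simp: indicator_def)
      also have "\<dots> = hn (fst z) * \<phi> z" using rng[of "fst z"] by (simp add: hn_def)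
      finally show ?thesis by simp
    qed
    have int_ind: "integrable P (\<lambda>z. indicator {x. \<lfloor>real n * h x\<rfloor> = k} (fst z) * \<phi> z)" for k
      by (rule intb[OF borel_measurable_indicator[OF sets[of k]], where C=1]) (auto simp: indicator_def)
    have "(\<integral>z. hn (fst z) * \<phi> z \<partial>P) = (\<Sum>k\<in>{-N..N}. (real_of_int k / real n) * (\<integral>z. indicator {x. \<lfloor>real n * h x\<rfloor> = k} (fst z) * \<phi> z \<partial>P))"
      unfolding decomp using int_ind by (simp add: integral_sum)
    also have "\<dots> = 0" using ind[OF sets] by simp
    finally have hn0: "(\<integral>z. hn (fst z) * \<phi> z \<partial>P) = 0" .
    have ih: "integrable P (\<lambda>z. h (fst z) * \<phi> z)" by (rule intb[OF hm hb])
    have ihn: "integrable P (\<lambda>z. hn (fst z) * \<phi> z)" by (rule intb[OF hnm hnbb])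
    have "I = (\<integral>z. h (fst z) * \<phi> z - hn (fst z) * \<phi> z \<partial>P)"
      unfolding I_def using ih ihn hn0 by simp
    also have "\<dots> \<le> \<bar>\<dots>\<bar>" by simp
    finally have "\<bar>I\<bar> \<le> (\<integral>z. \<bar>h (fst z) * \<phi> z - hn (fst z) * \<phi> z\<bar> \<partial>P)" 
      using integral_abs_bound[of P "\<lambda>z. h (fst z) * \<phi> z - hn (fst z) * \<phi> z"]
      unfolding I_def using ih ihn hn0 by simp
    also have "\<dots> \<le> (\<integral>z. (1 / real n) * \<bar>\<phi> z\<bar> \<partial>P)"
    proof (rule integral_mono)
      show "integrable P (\<lambda>z. \<bar>h (fst z) * \<phi> z - hn (fst z) * \<phi> z\<bar>)" using ih ihn by simp
      show "integrable P (\<lambda>z. (1 / real n) * \<bar>\<phi> z\<bar>)" using intp by simp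
      fix z
      have "\<bar>h (fst z) * \<phi> z - hn (fst z) * \<phi> z\<bar> = \<bar>h (fst z) - hn (fst z)\<bar> * \<bar>\<phi> z\<bar>"
        by (simp add: abs_mult[symmetric] left_diff_distrib)
      also have "\<dots> \<le> (1 / real n) * \<bar>\<phi> z\<bar>" using hnb by (intro mult_right_mono) auto
      finally show "\<bar>h (fst z) * \<phi> z - hn (fst z) * \<phi> z\<bar> \<le> (1 / real n) * \<bar>\<phi> z\<bar>" .
    qed
    also have "\<dots> = (\<integral>z. \<bar>\<phi> z\<bar> \<partial>P) / real n" by simp
    finally show ?thesis using n1 by (simp add: field_simps)
  qed
  show ?thesis
  proof (rule ccontr)
    assume "(\<integral>z. h (fst z) * \<phi> z \<partial>P) \<noteq> 0"
    hence Ip: "\<bar>I\<bar> > 0" unfolding I_def by simp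
    obtain n :: nat where n: "(\<integral>z. \<bar>\<phi> z\<bar> \<partial>P) / \<bar>I\<bar> < real n" using reals_Archimedean2 by blast
    have "\<bar>I\<bar> * real (Suc n) \<le> (\<integral>z. \<bar>\<phi> z\<bar> \<partial>P)" by (rule key) simp
    moreover have "(\<integral>z. \<bar>\<phi> z\<bar> \<partial>P) < \<bar>I\<bar> * real n" using n Ip by (simp add: field_simps)
    moreover have "\<bar>I\<bar> * real n \<le> \<bar>I\<bar> * real (Suc n)" using Ip by (intro mult_left_mono) auto
    ultimately show False by linarith
  qed
qed
lemma huber_bound: assumes "s > 0" shows "\<bar>huber s t\<bar> \<le> 2 * s * \<bar>t\<bar>"
proof (cases "\<bar>t\<bar> \<le> s")
  case True
  have "t\<^sup>2 = \<bar>t\<bar> * \<bar>t\<bar>" by (simp add: power2_eq_square)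
  also have "\<dots> \<le> s * \<bar>t\<bar>" using True by (intro mult_right_mono) auto
  also have "s * \<bar>t\<bar> \<le> 2 * s * \<bar>t\<bar>" using assms by simp
  finally show ?thesis using True assms by (simp add: huber_def)
next
  case False
  have "s * s \<le> s * \<bar>t\<bar>" using False assms by (intro mult_left_mono) auto
  thus ?thesis using False assms by (simp add: huber_def power2_eq_square)
qed
theorem theorem1:
  fixes \<X> :: "'a::euclidean_space set" and \<Y> :: "real set"
    and \<rho> :: "('a \<times> real) measure"
    and fstar :: "'a \<Rightarrow> real" and \<H> :: "('a \<Rightarrow> real) set"
    and \<epsilon> :: real and M :: real
  assumes X_compact: "compact \<X>"
    and rho_prob: "prob_space \<rho>"
    and rho_sets: "sets \<rho> = sets borel"
    and rho_supp: "AE z in \<rho>. fst z \<in> \<X> \<and> snd z \<in> \<Y>"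
    and fstar_meas: "fstar \<in> borel_measurable borel"
    and fstar_bdd: "\<exists>B. \<forall>x\<in>\<X>. \<bar>fstar x\<bar> \<le> B"
    and fstar_condexp: "\<forall>A\<in>sets borel.
          (\<integral>z. indicator A (fst z) * snd z \<partial>\<rho>) = (\<integral>z. indicator A (fst z) * fstar (fst z) \<partial>\<rho>)"
    and H_cont: "\<forall>h\<in>\<H>. continuous_on \<X> h"
    and H_unif_bdd: "\<exists>B. \<forall>h\<in>\<H>. \<forall>x\<in>\<X>. \<bar>h x\<bar> \<le> B"
    and M_def: "M = Sup ({sup_norm_on \<X> fstar} \<union> (sup_norm_on \<X>) ` \<H>)"
    and eps_pos: "\<epsilon> > 0"
    and moment: "integrable \<rho> (\<lambda>z. \<bar>snd z\<bar> powr (1 + \<epsilon>))"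
  shows "\<exists>c>0. \<forall>\<sigma>::real. \<sigma> > max (2 * M) 1 \<longrightarrow>
           (\<forall>f::'a \<Rightarrow> real. f \<in> borel_measurable borel \<longrightarrow> (\<forall>x\<in>\<X>. \<bar>f x\<bar> \<le> M) \<longrightarrow>
              \<bar>(huber_risk \<sigma> \<rho> f - huber_risk \<sigma> \<rho> fstar)
                 - (L2_norm_rho \<rho> (\<lambda>x. f x - fstar x))\<^sup>2\<bar> \<le> c / \<sigma> powr \<epsilon>)"
proof -
  interpret P: prob_space \<rho> by (rule rho_prob)
  have meq: "\<rho> \<rightarrow>\<^sub>M (borel :: real measure) = borel \<rightarrow>\<^sub>M borel" by (rule measurable_cong_sets[OF rho_sets refl])
  have meq2: "\<rho> \<rightarrow>\<^sub>M (borel :: 'a measure) = borel \<rightarrow>\<^sub>M borel" by (rule measurable_cong_sets[OF rho_sets refl])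
  have fstm[measurable]: "fst \<in> \<rho> \<rightarrow>\<^sub>M borel" using fst_meas meq2 by simp
  have sndm[measurable]: "snd \<in> borel_measurable \<rho>" using snd_meas meq by simp
  note [measurable] = fstar_meas huber_meas
  have Xne: "\<X> \<noteq> {}"
  proof
    assume "\<X> = {}"
    with rho_supp have "AE z in \<rho>. False" by simp
    thus False by (simp add: P.AE_False)
  qed
  obtain Bf where Bf: "\<forall>x\<in>\<X>. \<bar>fstar x\<bar> \<le> Bf" using fstar_bdd by blast
  obtain BH where BH: "\<forall>h\<in>\<H>. \<forall>x\<in>\<X>. \<bar>h x\<bar> \<le> BH" using H_unif_bdd by blast
  have fsn: "\<bar>fstar x\<bar> \<le> sup_norm_on \<X> fstar" if "x \<in> \<X>" for x
    unfolding sup_norm_on_def using that Bf by (intro cSUP_upper) (auto intro: bdd_aboveI2)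
  have hsn: "sup_norm_on \<X> h \<le> BH" if "h \<in> \<H>" for h
    unfolding sup_norm_on_def using Xne BH that by (intro cSUP_least) auto
  have bdd: "bdd_above ({sup_norm_on \<X> fstar} \<union> (sup_norm_on \<X>) ` \<H>)"
    using hsn by (intro bdd_aboveI[where M="max (sup_norm_on \<X> fstar) BH"]) force
  have "sup_norm_on \<X> fstar \<le> M" unfolding M_def using bdd by (intro cSup_upper) auto
  hence fsM: "\<forall>x\<in>\<X>. \<bar>fstar x\<bar> \<le> M" using fsn by force
  have M0: "M \<ge> 0" using fsM Xne by force
  define m where "m = (\<integral>z. \<bar>snd z\<bar> powr (1 + \<epsilon>) \<partial>\<rho>)"
  have m0: "m \<ge> 0" unfolding m_def by simp
  have iy: "integrable \<rho> (\<lambda>z. snd z)"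
  proof (rule Bochner_Integration.integrable_bound[OF Bochner_Integration.integrable_add[OF P.integrable_const[of 1] moment]])
    show "snd \<in> borel_measurable \<rho>" by simp
    show "AE z in \<rho>. norm (snd z) \<le> norm (1 + \<bar>snd z\<bar> powr (1 + \<epsilon>))"
      using abs_le_powr[OF eps_pos] by (intro AE_I2) (smt (verit) powr_ge_zero real_norm_def)
  qed
  define \<phi> where "\<phi> z = snd z - fstar (fst z)" for z
  have phim[measurable]: "\<phi> \<in> borel_measurable \<rho>" unfolding \<phi>_def by measurable
  have iphi: "integrable \<rho> \<phi>"
  proof (rule Bochner_Integration.integrable_bound[OF Bochner_Integration.integrable_add[OF integrable_abs[OF iy] P.integrable_const[of M]]])
    show "\<phi> \<in> borel_measurable \<rho>" by simp
    show "AE z in \<rho>. norm (\<phi> z) \<le> norm (\<bar>snd z\<bar> + M)"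
      using rho_supp by eventually_elim (use fsM M0 in \<open>auto simp: \<phi>_def\<close>)
  qed
  have ind: "(\<integral>z. indicator A (fst z) * \<phi> z \<partial>\<rho>) = 0" if A: "A \<in> sets borel" for A
  proof -
    have [measurable]: "A \<in> sets borel" by (rule A)
    have i1: "integrable \<rho> (\<lambda>z. indicator A (fst z) * snd z)"
      by (rule Bochner_Integration.integrable_bound[OF integrable_abs[OF iy]]) (auto simp: indicator_def)
    have i2: "integrable \<rho> (\<lambda>z. indicator A (fst z) * fstar (fst z))"
    proof (rule P.integrable_const_bound[where B=M])
      show "AE z in \<rho>. norm (indicator A (fst z) * fstar (fst z)) \<le> M"
        using rho_supp by eventually_elim (use fsM M0 in \<open>auto simp: indicator_def\<close>)
    qed simp
    have "(\<integral>z. indicator A (fst z) * \<phi> z \<partial>\<rho>) = (\<integral>z. indicator A (fst z) * snd z - indicator A (fst z) * fstar (fst z) \<partial>\<rho>)"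
      by (simp add: \<phi>_def right_diff_distrib)
    also have "\<dots> = 0" using i1 i2 fstar_condexp A by simp
    finally show ?thesis .
  qed
  define C where "C = 14 * M * 2 powr \<epsilon> + (20 * M\<^sup>2 + 4 * M) * (4 * M) powr \<epsilon>"
  have C0: "C \<ge> 0" unfolding C_def using M0 by simp
  define c where "c = C * (1 + m) + 1"
  show ?thesis
  proof (intro exI[of _ c] conjI allI impI)
    show "c > 0" unfolding c_def using C0 m0 by (simp add: add_nonneg_pos)
    fix \<sigma> :: real and f :: "'a \<Rightarrow> real"
    assume sM: "\<sigma> > max (2 * M) 1" and fm: "f \<in> borel_measurable borel" and fb: "\<forall>x\<in>\<X>. \<bar>f x\<bar> \<le> M"
    note [measurable] = fm
    have s0: "\<sigma> > 0" using sM by simp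
    have Xs[measurable]: "\<X> \<in> sets borel" using X_compact by (simp add: compact_imp_closed borel_closed)
    define g where "g x = indicator \<X> x * (f x - fstar x)" for x
    have gm[measurable]: "g \<in> borel_measurable borel" unfolding g_def by measurable
    have gb: "\<bar>g x\<bar> \<le> 2 * M" for x
    proof (cases "x \<in> \<X>")
      case True
      hence "\<bar>f x\<bar> \<le> M" "\<bar>fstar x\<bar> \<le> M" using fb fsM by auto
      thus ?thesis using True by (simp add: g_def)
    qed (use M0 in \<open>simp add: g_def\<close>)
    have orth0: "(\<integral>z. g (fst z) * \<phi> z \<partial>\<rho>) = 0" by (rule orth[OF iphi ind gm gb fstm])
    define H1 where "H1 z = huber \<sigma> (snd z - f (fst z))" for z
    define H2 where "H2 z = huber \<sigma> (snd z - fstar (fst z))" for z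
    define E where "E z = H1 z - H2 z - ((g (fst z))\<^sup>2 - 2 * g (fst z) * \<phi> z)" for z
    have iyM: "integrable \<rho> (\<lambda>z. 2 * \<sigma> * (\<bar>snd z\<bar> + M))"
      by (intro integrable_mult_right Bochner_Integration.integrable_add integrable_abs iy P.integrable_const)
    have iH1: "integrable \<rho> H1"
    proof (rule Bochner_Integration.integrable_bound[OF iyM])
      show "H1 \<in> borel_measurable \<rho>" unfolding H1_def by measurable
      show "AE z in \<rho>. norm (H1 z) \<le> norm (2 * \<sigma> * (\<bar>snd z\<bar> + M))"
        using rho_supp
      proof eventually_elim
        case (elim z)
        have "\<bar>H1 z\<bar> \<le> 2 * \<sigma> * \<bar>snd z - f (fst z)\<bar>" unfolding H1_def by (rule huber_bound[OF s0])
        also have "\<dots> \<le> 2 * \<sigma> * (\<bar>snd z\<bar> + M)" using elim fb s0 by (intro mult_left_mono) auto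
        finally show ?case using s0 M0 by simp
      qed
    qed
    have iH2: "integrable \<rho> H2"
    proof (rule Bochner_Integration.integrable_bound[OF iyM])
      show "H2 \<in> borel_measurable \<rho>" unfolding H2_def by measurable
      show "AE z in \<rho>. norm (H2 z) \<le> norm (2 * \<sigma> * (\<bar>snd z\<bar> + M))"
        using rho_supp
      proof eventually_elim
        case (elim z)
        have "\<bar>H2 z\<bar> \<le> 2 * \<sigma> * \<bar>snd z - fstar (fst z)\<bar>" unfolding H2_def by (rule huber_bound[OF s0])
        also have "\<dots> \<le> 2 * \<sigma> * (\<bar>snd z\<bar> + M)" using elim fsM s0 by (intro mult_left_mono) auto
        finally show ?case using s0 M0 by simp
      qed
    qed
    have ig2: "integrable \<rho> (\<lambda>z. (g (fst z))\<^sup>2)"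
    proof (rule P.integrable_const_bound[where B="(2 * M)\<^sup>2"])
      show "AE z in \<rho>. norm ((g (fst z))\<^sup>2) \<le> (2 * M)\<^sup>2"
      proof (intro AE_I2)
        fix z
        have "\<bar>g (fst z)\<bar> \<le> \<bar>2 * M\<bar>" using gb[of "fst z"] M0 by simp
        hence "(g (fst z))\<^sup>2 \<le> (2 * M)\<^sup>2" by (simp only: abs_le_square_iff)
        thus "norm ((g (fst z))\<^sup>2) \<le> (2 * M)\<^sup>2" by simp
      qed
    qed simp
    have iphiM: "integrable \<rho> (\<lambda>z. 2 * M * \<bar>\<phi> z\<bar>)"
      by (intro integrable_mult_right integrable_abs iphi)
    have igphi: "integrable \<rho> (\<lambda>z. g (fst z) * \<phi> z)"
    proof (rule Bochner_Integration.integrable_bound[OF iphiM])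
      show "(\<lambda>z. g (fst z) * \<phi> z) \<in> borel_measurable \<rho>" by measurable
      show "AE z in \<rho>. norm (g (fst z) * \<phi> z) \<le> norm (2 * M * \<bar>\<phi> z\<bar>)"
        using gb M0 by (intro AE_I2) (simp add: abs_mult mult_right_mono)
    qed
    have "integrable \<rho> (\<lambda>z. H1 z - H2 z - ((g (fst z))\<^sup>2 - 2 * (g (fst z) * \<phi> z)))"
      by (intro Bochner_Integration.integrable_diff integrable_mult_right iH1 iH2 ig2 igphi)
    hence iE: "integrable \<rho> E" unfolding E_def by (simp add: mult.assoc)
    have "huber_risk \<sigma> \<rho> f - huber_risk \<sigma> \<rho> fstar = (\<integral>z. H1 z \<partial>\<rho>) - (\<integral>z. H2 z \<partial>\<rho>)"
      by (simp add: huber_risk_def H1_def H2_def)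
    also have "\<dots> = (\<integral>z. H1 z - H2 z \<partial>\<rho>)" using iH1 iH2 by simp
    also have "\<dots> = (\<integral>z. ((g (fst z))\<^sup>2 - 2 * (g (fst z) * \<phi> z)) + E z \<partial>\<rho>)"
      by (simp add: E_def)
    also have "\<dots> = (\<integral>z. (g (fst z))\<^sup>2 \<partial>\<rho>) - 2 * (\<integral>z. g (fst z) * \<phi> z \<partial>\<rho>) + (\<integral>z. E z \<partial>\<rho>)"
      using ig2 igphi iE by simp
    also have "\<dots> = (\<integral>z. (g (fst z))\<^sup>2 \<partial>\<rho>) + (\<integral>z. E z \<partial>\<rho>)" using orth0 by simp
    finally have risk: "huber_risk \<sigma> \<rho> f - huber_risk \<sigma> \<rho> fstar = (\<integral>z. (g (fst z))\<^sup>2 \<partial>\<rho>) + (\<integral>z. E z \<partial>\<rho>)" .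
    have "(\<integral>x. (f x - fstar x)\<^sup>2 \<partial>(marginal_X \<rho>)) = (\<integral>z. (f (fst z) - fstar (fst z))\<^sup>2 \<partial>\<rho>)"
      unfolding marginal_X_def by (rule integral_distr) (simp_all)
    also have "\<dots> = (\<integral>z. (g (fst z))\<^sup>2 \<partial>\<rho>)"
    proof (rule integral_cong_AE)
      show "AE z in \<rho>. (f (fst z) - fstar (fst z))\<^sup>2 = (g (fst z))\<^sup>2"
        using rho_supp by eventually_elim (simp add: g_def)
    qed measurable
    finally have L2: "(L2_norm_rho \<rho> (\<lambda>x. f x - fstar x))\<^sup>2 = (\<integral>z. (g (fst z))\<^sup>2 \<partial>\<rho>)"
      unfolding L2_norm_rho_def by simp
    have Eb: "AE z in \<rho>. \<bar>E z\<bar> \<le> C / \<sigma> powr \<epsilon> * (1 + \<bar>snd z\<bar> powr (1 + \<epsilon>))"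
      using rho_supp
    proof eventually_elim
      case (elim z)
      have "E z = huber \<sigma> (snd z - f (fst z)) - huber \<sigma> (snd z - fstar (fst z))
           - ((f (fst z) - fstar (fst z))\<^sup>2 - 2 * (f (fst z) - fstar (fst z)) * (snd z - fstar (fst z)))"
        using elim by (simp add: E_def H1_def H2_def g_def \<phi>_def)
      thus ?case unfolding C_def
        using err_bound[OF M0 sM eps_pos, of "fstar (fst z)" "f (fst z)" "snd z"] elim fsM fb by simp
    qed
    have "\<bar>(huber_risk \<sigma> \<rho> f - huber_risk \<sigma> \<rho> fstar) - (L2_norm_rho \<rho> (\<lambda>x. f x - fstar x))\<^sup>2\<bar>
        = \<bar>\<integral>z. E z \<partial>\<rho>\<bar>" using risk L2 by simp
    also have "\<dots> \<le> (\<integral>z. \<bar>E z\<bar> \<partial>\<rho>)" by (rule integral_abs_bound)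
    also have "\<dots> \<le> (\<integral>z. C / \<sigma> powr \<epsilon> * (1 + \<bar>snd z\<bar> powr (1 + \<epsilon>)) \<partial>\<rho>)"
      by (rule integral_mono_AE[OF integrable_abs[OF iE] _ Eb])
         (intro integrable_mult_right Bochner_Integration.integrable_add P.integrable_const moment)
    also have "\<dots> = C / \<sigma> powr \<epsilon> * (1 + m)"
      unfolding m_def using moment P.prob_space by (simp add: lebesgue_integral_const)
    also have "\<dots> \<le> c / \<sigma> powr \<epsilon>" unfolding c_def using s0
      by (simp add: divide_right_mono field_simps)
    finally show "\<bar>(huber_risk \<sigma> \<rho> f - huber_risk \<sigma> \<rho> fstar) - (L2_norm_rho \<rho> (\<lambda>x. f x - fstar x))\<^sup>2\<bar> \<le> c / \<sigma> powr \<epsilon>" .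
  qed
qed

end
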